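(* Let $f$ be a transcendental entire function, $f_n(z):=f(nz)/n$, and let $(f_{n_k})$ be a subsequence and $0<s<1$ such that $f_{n_k}\to\infty$ uniformly on compact subsets of $\mathbb D_s\setminus\{0\}$. Let $0<r<s$, $R>0$ and $m\in\mathbb N$. Then there exists $k_0$ such that for all $k>k_0$: (1) $|f_{n_k}(z)|>R$ for every $z\in\partial\mathbb D_r$; and (2) the winding number of the closed curve $f_{n_k}(\partial\mathbb D_r)$ around $0$ is at least $m$.
   Context: $\mathbb D_r$ denotes the open Euclidean disk of radius $r$ centered at $0$. *)

theory Defs
  imports "HOL-Complex_Analysis.Complex_Analysis" "HOL-Computational_Algebra.Polynomial"
begin

definition transcendental_entire :: "(complex \<Rightarrow> complex) \<Rightarrow> bool" where
  "transcendental_entire f \<longleftrightarrow> f holomorphic_on UNIV \<and> \<not> (\<exists>p. \<forall>z. f z = poly p z)"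

definition rescale :: "(complex \<Rightarrow> complex) \<Rightarrow> nat \<Rightarrow> complex \<Rightarrow> complex" where
  "rescale f n z = f (of_nat n * z) / of_nat n"

definition tends_to_infinity_locally_uniformly ::
    "(nat \<Rightarrow> complex \<Rightarrow> complex) \<Rightarrow> complex set \<Rightarrow> bool" where
  "tends_to_infinity_locally_uniformly F U \<longleftrightarrow>
     (\<forall>K. compact K \<and> K \<subseteq> U \<longrightarrow>
        (\<forall>M::real. \<exists>N. \<forall>k\<ge>N. \<forall>z\<in>K. norm (F k z) > M))"

end

theory Submission imports Defs begin

lemma card_zeros_le_winding:
  fixes h :: "complex \<Rightarrow> complex" and r :: real
  assumes holo: "h holomorphic_on UNIV" and r: "r > 0" and nz: "\<forall>z\<in>sphere 0 r. h z \<noteq> 0"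
  shows "\<exists>w::int. winding_number (h \<circ> circlepath 0 r) 0 = of_int w
            \<and> int (card {z\<in>ball 0 r. h z = 0}) \<le> w"
proof -
  define S where "S = ball (0::complex) (r+1)"
  define pz where "pz = {w\<in>S. h w = 0}"
  define Zr where "Zr = {z\<in>ball 0 r. h z = 0}"
  let ?g = "circlepath (0::complex) r"
  have fincb: "finite {z\<in>cball 0 (r+1). h z = 0}"
  proof (cases "h constant_on UNIV")
    case True
    then obtain c where c: "\<And>z. h z = c" by (auto simp: constant_on_def)
    have "h (of_real r) \<noteq> 0" using nz r by auto
    then show ?thesis using c by auto
  next
    case False
    show ?thesis
      by (rule holomorphic_compact_finite_zeros[OF holo open_UNIV connected_UNIV compact_cball _ False]) auto
  qed
  have finpz: "finite pz" unfolding pz_def S_def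
    by (rule finite_subset[OF _ fincb]) auto
  have pimg: "path_image ?g = sphere 0 r" using r by simp
  have AP: "contour_integral ?g (\<lambda>x. deriv h x * 1 / h x) = 2 * pi * \<i> *
          (\<Sum>p\<in>pz. winding_number ?g p * 1 * zorder h p)"
  proof -
    have o: "open S" "connected S" unfolding S_def by auto
    have hS: "h holomorphic_on S - {}" using holo by (rule holomorphic_on_subset) auto
    have pi: "path_image ?g \<subseteq> S - {w\<in>S. h w = 0 \<or> w \<in> {}}" using pimg nz r unfolding S_def by auto
    have ho: "\<forall>z. z \<notin> S \<longrightarrow> winding_number ?g z = 0"
    proof (intro allI impI)
      fix z assume "z \<notin> S"
      then have "z \<notin> cball 0 r" unfolding S_def by auto
      then show "winding_number ?g z = 0"
        by (intro winding_number_zero_outside[of _ "cball 0 r"]) (use pimg in auto)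
    qed
    have fi: "finite {w\<in>S. h w = 0 \<or> w \<in> {}}" using finpz unfolding pz_def by simp
    have hh: "(\<lambda>_. 1::complex) holomorphic_on S" by simp
    show ?thesis
      using argument_principle[where f=h and poles="{}" and S=S and h="\<lambda>_. 1" and g="?g",
          OF o hS hh valid_path_circlepath _ pi ho fi]
      unfolding pz_def by simp
  qed
  have an: "h analytic_on UNIV" using holo by (simp add: analytic_on_open)
  have "winding_number (h \<circ> ?g) 0 = 1/(2*pi*\<i>) * contour_integral (h \<circ> ?g) (\<lambda>w. 1/(w - 0))"
  proof (rule winding_number_valid_path)
    show "valid_path (h \<circ> ?g)"
      by (rule valid_path_compose_holomorphic[OF valid_path_circlepath holo]) auto
    show "0 \<notin> path_image (h \<circ> ?g)" using nz pimg by (auto simp: path_image_compose)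
  qed
  also have "contour_integral (h \<circ> ?g) (\<lambda>w. 1/(w - 0)) = contour_integral ?g (\<lambda>x. deriv h x * 1 / h x)"
    by (subst contour_integral_comp_analyticW[OF an]) auto
  finally have W: "winding_number (h \<circ> ?g) 0 = (\<Sum>p\<in>pz. winding_number ?g p * 1 * zorder h p)"
    using AP by (simp add: o_def)
  have "(\<Sum>p\<in>pz. winding_number ?g p * 1 * zorder h p) = (\<Sum>p\<in>Zr. of_int (zorder h p))"
  proof (rule sum.mono_neutral_cong_right[OF finpz])
    show "Zr \<subseteq> pz" unfolding Zr_def pz_def S_def by auto
    show "\<forall>p\<in>pz - Zr. winding_number ?g p * 1 * of_int (zorder h p) = 0"
    proof
      fix p assume that: "p \<in> pz - Zr"
      have "p \<notin> sphere 0 r" using that nz unfolding pz_def by auto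
      moreover have "p \<notin> ball 0 r" using that unfolding pz_def Zr_def by auto
      ultimately have "p \<notin> cball 0 r" by auto
      then have "winding_number ?g p = 0"
        by (intro winding_number_zero_outside[of _ "cball 0 r"]) (use pimg in auto)
      then show "winding_number ?g p * 1 * of_int (zorder h p) = 0" by simp
    qed
    show "winding_number ?g p * 1 * of_int (zorder h p) = of_int (zorder h p)" if "p \<in> Zr" for p
      using that winding_number_circlepath[of p 0 r] unfolding Zr_def by auto
  qed
  also have "\<dots> = of_int (\<Sum>p\<in>Zr. zorder h p)" by simp
  finally have W2: "winding_number (h \<circ> ?g) 0 = of_int (\<Sum>p\<in>Zr. zorder h p)" using W by simp
  have finZr: "finite Zr" using finpz unfolding Zr_def pz_def S_def
    by (rule finite_subset[rotated]) auto
  have ne: "\<exists>w\<in>UNIV. h w \<noteq> 0" using nz r by (intro bexI[of _ "of_real r"]) auto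
  have "int (card Zr) = (\<Sum>p\<in>Zr. 1)" by simp
  also have "\<dots> \<le> (\<Sum>p\<in>Zr. zorder h p)"
  proof (rule sum_mono)
    fix p assume "p \<in> Zr"
    then have "h p = 0" unfolding Zr_def by auto
    then show "1 \<le> zorder h p"
      using conjunct1[OF zorder_exist_zero[OF holo open_UNIV connected_UNIV UNIV_I ne, of p]] by simp
  qed
  finally show ?thesis using W2 unfolding Zr_def by blast
qed


lemma card_rescale_zeros:
  fixes f :: "complex \<Rightarrow> complex" and n :: nat and r :: real
  assumes "n > 0"
  shows "card {z\<in>ball 0 r. rescale f n z = 0} = card {w\<in>ball 0 (real n * r). f w = 0}"
proof -
  have "{w\<in>ball 0 (real n * r). f w = 0} = (\<lambda>z. of_nat n * z) ` {z\<in>ball 0 r. rescale f n z = 0}"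
  proof (intro equalityI subsetI)
    fix w assume w: "w \<in> {w\<in>ball 0 (real n * r). f w = 0}"
    have "w = of_nat n * (w / of_nat n)" using assms by simp
    moreover have "w / of_nat n \<in> {z\<in>ball 0 r. rescale f n z = 0}"
      using w assms by (auto simp: rescale_def norm_divide field_simps)
    ultimately show "w \<in> (\<lambda>z. of_nat n * z) ` {z\<in>ball 0 r. rescale f n z = 0}" by blast
  next
    fix w assume "w \<in> (\<lambda>z. of_nat n * z) ` {z\<in>ball 0 r. rescale f n z = 0}"
    then obtain z where z: "norm z < r" "rescale f n z = 0" "w = of_nat n * z" by auto
    then show "w \<in> {w\<in>ball 0 (real n * r). f w = 0}"
      using assms by (auto simp: rescale_def norm_mult)
  qed
  moreover have "inj_on (\<lambda>z. of_nat n * z) {z\<in>ball 0 r. rescale f n z = 0}"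
    using assms by (auto simp: inj_on_def)
  ultimately show ?thesis by (simp add: card_image)
qed

lemma sum_is_poly:
  fixes a :: "nat \<Rightarrow> complex"
  shows "\<exists>p. \<forall>z. (\<Sum>i\<le>n. a i * z^i) = poly p z"
  by (rule exI[of _ "\<Sum>i\<le>n. monom (a i) i"]) (simp add: poly_sum poly_monom)

lemma rescale_holo:
  assumes "f holomorphic_on UNIV"
  shows "rescale f n holomorphic_on UNIV"
proof -
  have "(f \<circ> (\<lambda>z. of_nat n * z)) holomorphic_on UNIV"
    by (rule holomorphic_on_compose) (auto intro: holomorphic_on_subset[OF assms])
  then show ?thesis unfolding rescale_def o_def
    by (intro holomorphic_intros) auto
qed


theorem mainTheorem7:
  fixes f :: "complex \<Rightarrow> complex" and nk :: "nat \<Rightarrow> nat"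
    and s r R :: real and m :: nat
  assumes "transcendental_entire f"
    and "strict_mono nk"
    and "0 < s" and "s < 1"
    and "tends_to_infinity_locally_uniformly (\<lambda>k. rescale f (nk k)) (ball 0 s - {0})"
    and "0 < r" and "r < s" and "R > 0"
  shows "\<exists>k0. \<forall>k>k0.
           (\<forall>z\<in>sphere 0 r. norm (rescale f (nk k) z) > R) \<and>
           (\<exists>w::int. winding_number (rescale f (nk k) \<circ> circlepath 0 r) 0 = of_int w
                     \<and> w \<ge> int m)"
proof -
  note tr = assms(1) and sm = assms(2) and lu = assms(5) and r = assms(6) and rs = assms(7) and R = assms(8)
  have holf: "f holomorphic_on UNIV" and notpoly: "\<not> (\<exists>p. \<forall>z. f z = poly p z)"
    using tr unfolding transcendental_entire_def by auto
  have incr: "k \<le> nk k" for k using strict_mono_imp_increasing[OF sm] .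
  have "compact (sphere (0::complex) r)" "sphere (0::complex) r \<subseteq> ball 0 s - {0}"
    using r rs by auto
  then obtain N where N: "\<And>k z. k \<ge> N \<Longrightarrow> z \<in> sphere 0 r \<Longrightarrow> norm (rescale f (nk k) z) > max R 1"
    using lu unfolding tends_to_infinity_locally_uniformly_def by meson
  have bigcirc: "norm (f w) > real (nk k)" if "k \<ge> N" "k \<ge> 1" "norm w = real (nk k) * r" for k w
  proof -
    have nkpos: "real (nk k) > 0" using incr[of k] that by simp
    have "w / of_nat (nk k) \<in> sphere 0 r" using that nkpos by (simp add: norm_divide)
    then have "norm (rescale f (nk k) (w / of_nat (nk k))) > 1" using N[OF that(1)] by fastforce
    then show ?thesis using nkpos by (simp add: rescale_def norm_divide field_simps)
  qed
  have fin_ball: "finite {w\<in>ball 0 \<rho>. f w = 0}" for \<rho>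
  proof -
    have "\<not> f constant_on UNIV"
    proof
      assume "f constant_on UNIV"
      then obtain c where "\<And>z. f z = c" by (auto simp: constant_on_def)
      then have "\<forall>z. f z = poly [:c:] z" by simp
      then show False using notpoly by blast
    qed
    then have "finite {w\<in>cball 0 \<rho>. f w = 0}"
      by (intro holomorphic_compact_finite_zeros[OF holf]) auto
    then show ?thesis by (rule finite_subset[rotated]) auto
  qed
  show ?thesis
  proof (rule ccontr)
    assume neg: "\<not> ?thesis"
    have bad: "\<exists>k>k0. card {w\<in>ball 0 (real (nk k) * r). f w = 0} < m" for k0
    proof -
      from neg obtain k where k: "k > max k0 N" and
        nb: "\<not> ((\<forall>z\<in>sphere 0 r. norm (rescale f (nk k) z) > R) \<and>
           (\<exists>w::int. winding_number (rescale f (nk k) \<circ> circlepath 0 r) 0 = of_int w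
                     \<and> w \<ge> int m))"
        by blast
      have p1: "\<forall>z\<in>sphere 0 r. norm (rescale f (nk k) z) > R"
        using N[of k] k by fastforce
      have nz: "\<forall>z\<in>sphere 0 r. rescale f (nk k) z \<noteq> 0"
        using p1 R by fastforce
      obtain w :: int where w: "winding_number (rescale f (nk k) \<circ> circlepath 0 r) 0 = of_int w"
        "int (card {z\<in>ball 0 r. rescale f (nk k) z = 0}) \<le> w"
        using card_zeros_le_winding[OF rescale_holo[OF holf] r nz] by blast
      have "w < int m" using nb p1 w(1) by auto
      moreover have "nk k > 0" using incr[of k] k by simp
      ultimately show ?thesis using w(2) k card_rescale_zeros[of "nk k" r f] by auto
    qed
    define Z where "Z = {w. f w = 0}"
    have finZ: "finite Z"
    proof -
      have "finite Z \<and> card Z \<le> m"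
      proof (rule finite_if_finite_subsets_card_bdd)
        fix G assume G: "G \<subseteq> Z" "finite G"
        then obtain \<rho> where \<rho>: "G \<subseteq> ball 0 \<rho>"
          using finite_imp_bounded bounded_subset_ballD by blast
        obtain k where k: "k > nat \<lceil>\<rho> / r\<rceil>" and c: "card {w\<in>ball 0 (real (nk k) * r). f w = 0} < m"
          using bad by blast
        have "\<rho> / r < real k" using k by linarith
        then have "\<rho> < real k * r" using r by (simp add: field_simps)
        also have "\<dots> \<le> real (nk k) * r" using incr[of k] r by simp
        finally have "G \<subseteq> {w\<in>ball 0 (real (nk k) * r). f w = 0}"
          using \<rho> G(1) unfolding Z_def by auto
        then have "card G \<le> card {w\<in>ball 0 (real (nk k) * r). f w = 0}"
          by (intro card_mono fin_ball)
        then show "card G \<le> m" using c by simp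
      qed
      then show ?thesis by simp
    qed
    then obtain \<rho>0 where \<rho>0: "Z \<subseteq> ball 0 \<rho>0"
      using finite_imp_bounded bounded_subset_ballD by blast
    have lim: "((inverse \<circ> f) \<longlongrightarrow> 0) at_infinity"
      unfolding Lim_at_infinity
    proof (intro allI impI)
      fix e :: real assume e: "e > 0"
      obtain k where k: "k \<ge> N" "k \<ge> 1" "real k > 1 / e" "real k * r > \<rho>0"
      proof -
        obtain k where "real k > max (max (1/e) (\<rho>0 / r)) (real N + 1)"
          using reals_Archimedean2 by blast
        then show ?thesis using r by (intro that[of k]) (auto simp: field_simps)
      qed
      have nkk: "real (nk k) \<ge> real k" using incr[of k] by simp
      show "\<exists>b. \<forall>x. norm x \<ge> b \<longrightarrow> dist ((inverse \<circ> f) x) 0 < e"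
      proof (intro exI allI impI)
        fix x :: complex assume x: "norm x \<ge> real (nk k) * r"
        obtain j where j: "real j > max (norm x / r) (real k)"
          using reals_Archimedean2 by blast
        have jk: "j \<ge> k" "j \<ge> N" "j \<ge> 1" using j k by auto
        have nkj: "real (nk j) \<ge> real (nk k)" using strict_mono_less_eq[OF sm] jk by simp
        have xj: "norm x \<le> real (nk j) * r"
        proof -
          have "norm x / r < real j" using j by auto
          then have "norm x < real j * r" using r by (simp add: field_simps)
          also have "\<dots> \<le> real (nk j) * r" using incr[of j] r by simp
          finally show ?thesis by simp
        qed
        define a where "a = real (nk k) * r"
        define b where "b = real (nk j) * r"
        define A where "A = cball (0::complex) b - ball 0 a"
        have apos: "a > 0" unfolding a_def using k nkk r by simp
        have nzA: "f w \<noteq> 0" if "w \<in> A" for w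
        proof
          assume "f w = 0"
          then have "norm w < \<rho>0" using \<rho>0 unfolding Z_def by auto
          moreover have "norm w \<ge> a" using that unfolding A_def by auto
          moreover have "a \<ge> real k * r" unfolding a_def using nkk r by simp
          ultimately show False using k by linarith
        qed
        have clA: "closure A = A" unfolding A_def by (intro closure_closed) auto
        have intA: "interior A = ball 0 b - cball 0 a" unfolding A_def
          using apos by (simp add: interior_diff)
        have "norm ((inverse \<circ> f) x) \<le> 1 / real (nk k)"
        proof (rule maximum_modulus_frontier[of "inverse \<circ> f" A])
          have "(inverse \<circ> f) holomorphic_on A"
            unfolding o_def using nzA by (intro holomorphic_intros holomorphic_on_subset[OF holf]) auto
          then show "(inverse \<circ> f) holomorphic_on interior A"
            by (rule holomorphic_on_subset) (use interior_subset in auto)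
          show "continuous_on (closure A) (inverse \<circ> f)"
            unfolding clA by (intro holomorphic_on_imp_continuous_on) fact
          show "bounded A" unfolding A_def by auto
          show "x \<in> A" unfolding A_def a_def b_def using x xj by auto
          fix z assume z: "z \<in> frontier A"
          then have zA: "z \<in> A" "z \<notin> interior A" unfolding frontier_def clA by auto
          have "z \<notin> ball 0 b - cball 0 a" using zA(2) intA by simp
          then have "norm z = a \<or> norm z = b" using zA(1) unfolding A_def by auto
          then have "norm (f z) > real (nk k)"
          proof
            assume "norm z = a" then show ?thesis using bigcirc[OF k(1,2)] unfolding a_def by simp
          next
            assume "norm z = b" then have "norm (f z) > real (nk j)"
              using bigcirc[OF jk(2,3)] unfolding b_def by simp
            then show ?thesis using nkj by simp
          qed
          moreover have "real (nk k) > 0" using nkk k by simp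
          ultimately have "inverse (norm (f z)) \<le> inverse (real (nk k))"
            by (intro le_imp_inverse_le) auto
          then show "norm ((inverse \<circ> f) z) \<le> 1 / real (nk k)"
            by (simp add: norm_inverse divide_inverse)
        qed
        also have "\<dots> < e"
        proof -
          have "1 / e < real (nk k)" using k nkk by simp
          moreover have "real (nk k) > 0" using nkk k by simp
          ultimately show ?thesis using e by (simp add: field_simps)
        qed
        finally show "dist ((inverse \<circ> f) x) 0 < e" by simp
      qed
    qed
    obtain a n where "\<And>z. f z = (\<Sum>i\<le>n. a i * z^i)"
      using pole_at_infinity[OF holf lim] by blast
    then show False using notpoly sum_is_poly[of a n] by metis
  qed
qed

end
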